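(* Let $\mathcal G_1\xleftarrow{P_1}\mathcal H\xrightarrow{P_2}\mathcal G_2$ be a fibrant span of essentially finite groupoids, $\rho_i:\mathcal G_i\to\mathrm{Vect}_{\mathbb C}$ functors, and $\sigma:\rho_1P_1\Rightarrow\rho_2P_2$ a natural transformation. For $G_1\in\mathrm{Ob}\,\mathcal G_1$, $G_2\in\mathrm{Ob}\,\mathcal G_2$ write $\{G_1|\mathcal H|G_2\}=\mathrm{Fib}(\langle P_1,P_2\rangle,(G_1,G_2))$ and let $\mathcal R(\mathcal H,G_1,G_2)$ be a set of representatives of its path-components (this set is finite and all automorphism groups in the fibre are finite). Then the linear map $$S^{G_1,G_2}_\sigma=\frac{1}{|\mathrm{Aut}_{\mathcal G_2}(G_2)|}\sum_{H\in\mathcal R(\mathcal H,G_1,G_2)}\frac{1}{|\mathrm{Aut}_{\{G_1|\mathcal H|G_2\}}(H)|}\,\sigma_H:\rho_1(G_1)\to\rho_2(G_2)$$ is independent of the choice of $\mathcal R(\mathcal H,G_1,G_2)$ and takes values in the invariant subspace $\rho_2(G_2)^{\mathrm{Aut}_{\mathcal G_2}(G_2)}=\{x\in\rho_2(G_2)\mid \rho_2(g)x=x\ \forall g\in\mathrm{Aut}_{\mathcal G_2}(G_2)\}$.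
   Context: A groupoid is essentially finite if it is equivalent to a groupoid with finitely many objects and morphisms. A functor $F:\mathcal E\to\mathcal B$ of groupoids is a fibration if for every object $E$ and morphism $h:B'\to F(E)$ there is $g:E'\to E$ with $F(g)=h$; a span $\mathcal G_1\xleftarrow{P_1}\mathcal H\xrightarrow{P_2}\mathcal G_2$ is fibrant if $\langle P_1,P_2\rangle:\mathcal H\to\mathcal G_1\times\mathcal G_2$ is a fibration. For a functor $F:\mathcal A\to\mathcal B$ and $B\in\mathrm{Ob}\,\mathcal B$, the fibre $\mathrm{Fib}(F,B)$ has objects $A$ with $F(A)=B$ and morphisms the $f$ in $\mathcal A$ with $F(f)=1_B$. $\mathrm{Aut}_{\mathcal G}(G)=\hom_{\mathcal G}(G,G)$. *)

theory Defs
  imports Complex_Main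
begin

text \<open>A (small) groupoid: objects, hom-sets, composition (cmp g f = g after f), identities.\<close>
record ('o,'m) gpd =
  Obj :: "'o set"
  Hom :: "'o \<Rightarrow> 'o \<Rightarrow> 'm set"
  cmp :: "'m \<Rightarrow> 'm \<Rightarrow> 'm"
  idm :: "'o \<Rightarrow> 'm"

definition groupoid :: "('o,'m) gpd \<Rightarrow> bool" where
  "groupoid G \<longleftrightarrow>
     (\<forall>A B. Hom G A B \<noteq> {} \<longrightarrow> A \<in> Obj G \<and> B \<in> Obj G) \<and>
     (\<forall>A B A' B' f. f \<in> Hom G A B \<and> f \<in> Hom G A' B' \<longrightarrow> A = A' \<and> B = B') \<and>
     (\<forall>A\<in>Obj G. idm G A \<in> Hom G A A) \<and>
     (\<forall>A B C f g. f \<in> Hom G A B \<longrightarrow> g \<in> Hom G B C \<longrightarrow> cmp G g f \<in> Hom G A C) \<and>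
     (\<forall>A B C D f g h. f \<in> Hom G A B \<longrightarrow> g \<in> Hom G B C \<longrightarrow> h \<in> Hom G C D \<longrightarrow>
         cmp G h (cmp G g f) = cmp G (cmp G h g) f) \<and>
     (\<forall>A B f. f \<in> Hom G A B \<longrightarrow> cmp G f (idm G A) = f \<and> cmp G (idm G B) f = f) \<and>
     (\<forall>A B f. f \<in> Hom G A B \<longrightarrow> (\<exists>g\<in>Hom G B A. cmp G g f = idm G A \<and> cmp G f g = idm G B))"

definition Aut :: "('o,'m) gpd \<Rightarrow> 'o \<Rightarrow> 'm set" where
  "Aut G X = Hom G X X"

definition gfunctor :: "('o,'m) gpd \<Rightarrow> ('p,'n) gpd \<Rightarrow> ('o \<Rightarrow> 'p) \<Rightarrow> ('m \<Rightarrow> 'n) \<Rightarrow> bool" where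
  "gfunctor G K Fo Fm \<longleftrightarrow>
     (\<forall>A\<in>Obj G. Fo A \<in> Obj K) \<and>
     (\<forall>A B f. f \<in> Hom G A B \<longrightarrow> Fm f \<in> Hom K (Fo A) (Fo B)) \<and>
     (\<forall>A B C f g. f \<in> Hom G A B \<longrightarrow> g \<in> Hom G B C \<longrightarrow> Fm (cmp G g f) = cmp K (Fm g) (Fm f)) \<and>
     (\<forall>A\<in>Obj G. Fm (idm G A) = idm K (Fo A))"

text \<open>Natural transformations between functors (Fo,Fm) and (Fo',Fm') from G to K.
  Between groupoids these are automatically natural isomorphisms.\<close>
definition nat_trans :: "('o,'m) gpd \<Rightarrow> ('p,'n) gpd \<Rightarrow> ('o \<Rightarrow> 'p) \<Rightarrow> ('m \<Rightarrow> 'n)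
    \<Rightarrow> ('o \<Rightarrow> 'p) \<Rightarrow> ('m \<Rightarrow> 'n) \<Rightarrow> ('o \<Rightarrow> 'n) \<Rightarrow> bool" where
  "nat_trans G K Fo Fm Fo' Fm' \<eta> \<longleftrightarrow>
     (\<forall>A\<in>Obj G. \<eta> A \<in> Hom K (Fo A) (Fo' A)) \<and>
     (\<forall>A B f. f \<in> Hom G A B \<longrightarrow> cmp K (Fm' f) (\<eta> A) = cmp K (\<eta> B) (Fm f))"

definition equivalent_gpd :: "('o,'m) gpd \<Rightarrow> ('p,'n) gpd \<Rightarrow> bool" where
  "equivalent_gpd G K \<longleftrightarrow>
     (\<exists>Fo Fm Go Gm \<eta> \<epsilon>. gfunctor G K Fo Fm \<and> gfunctor K G Go Gm \<and>
        nat_trans G G id id (Go \<circ> Fo) (Gm \<circ> Fm) \<eta> \<and>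
        nat_trans K K id id (Fo \<circ> Go) (Fm \<circ> Gm) \<epsilon>)"

definition finite_gpd :: "('o,'m) gpd \<Rightarrow> bool" where
  "finite_gpd G \<longleftrightarrow> finite (Obj G) \<and> finite (\<Union>A\<in>Obj G. \<Union>B\<in>Obj G. Hom G A B)"

text \<open>Every finite groupoid is isomorphic to one whose objects and morphisms are natural numbers,
  so it suffices to quantify over groupoids of type (nat,nat) gpd.\<close>
definition ess_finite :: "('o,'m) gpd \<Rightarrow> bool" where
  "ess_finite G \<longleftrightarrow> (\<exists>K :: (nat,nat) gpd. groupoid K \<and> finite_gpd K \<and> equivalent_gpd G K)"

definition prod_gpd :: "('o,'m) gpd \<Rightarrow> ('p,'n) gpd \<Rightarrow> ('o \<times> 'p, 'm \<times> 'n) gpd" where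
  "prod_gpd G K = \<lparr> Obj = Obj G \<times> Obj K,
      Hom = (\<lambda>(A,A') (B,B'). Hom G A B \<times> Hom K A' B'),
      cmp = (\<lambda>(g,g') (f,f'). (cmp G g f, cmp K g' f')),
      idm = (\<lambda>(A,A'). (idm G A, idm K A')) \<rparr>"

definition fibration :: "('o,'m) gpd \<Rightarrow> ('p,'n) gpd \<Rightarrow> ('o \<Rightarrow> 'p) \<Rightarrow> ('m \<Rightarrow> 'n) \<Rightarrow> bool" where
  "fibration E B Fo Fm \<longleftrightarrow>
     (\<forall>X\<in>Obj E. \<forall>B'. \<forall>h \<in> Hom B B' (Fo X). \<exists>X' g. g \<in> Hom E X' X \<and> Fm g = h)"

definition fibrant_span :: "('o1,'m1) gpd \<Rightarrow> ('h,'hm) gpd \<Rightarrow> ('o2,'m2) gpd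
    \<Rightarrow> ('h \<Rightarrow> 'o1) \<Rightarrow> ('hm \<Rightarrow> 'm1) \<Rightarrow> ('h \<Rightarrow> 'o2) \<Rightarrow> ('hm \<Rightarrow> 'm2) \<Rightarrow> bool" where
  "fibrant_span G1 H G2 P1o P1m P2o P2m \<longleftrightarrow>
     fibration H (prod_gpd G1 G2) (\<lambda>X. (P1o X, P2o X)) (\<lambda>h. (P1m h, P2m h))"

definition Fib :: "('o,'m) gpd \<Rightarrow> ('p,'n) gpd \<Rightarrow> ('o \<Rightarrow> 'p) \<Rightarrow> ('m \<Rightarrow> 'n) \<Rightarrow> 'p \<Rightarrow> ('o,'m) gpd" where
  "Fib A B Fo Fm b = \<lparr> Obj = {X\<in>Obj A. Fo X = b},
      Hom = (\<lambda>X Y. {f \<in> Hom A X Y. Fo X = b \<and> Fo Y = b \<and> Fm f = idm B b}),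
      cmp = cmp A, idm = idm A \<rparr>"

definition span_fib :: "('o1,'m1) gpd \<Rightarrow> ('h,'hm) gpd \<Rightarrow> ('o2,'m2) gpd
    \<Rightarrow> ('h \<Rightarrow> 'o1) \<Rightarrow> ('hm \<Rightarrow> 'm1) \<Rightarrow> ('h \<Rightarrow> 'o2) \<Rightarrow> ('hm \<Rightarrow> 'm2) \<Rightarrow> 'o1 \<Rightarrow> 'o2 \<Rightarrow> ('h,'hm) gpd" where
  "span_fib G1 H G2 P1o P1m P2o P2m A B =
     Fib H (prod_gpd G1 G2) (\<lambda>X. (P1o X, P2o X)) (\<lambda>h. (P1m h, P2m h)) (A, B)"

definition component_reps :: "('o,'m) gpd \<Rightarrow> 'o set \<Rightarrow> bool" where
  "component_reps G R \<longleftrightarrow> R \<subseteq> Obj G \<and> (\<forall>X\<in>Obj G. \<exists>!Y. Y \<in> R \<and> Hom G X Y \<noteq> {})"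

definition lin_on :: "(complex \<Rightarrow> 'v \<Rightarrow> 'v) \<Rightarrow> (complex \<Rightarrow> 'w \<Rightarrow> 'w) \<Rightarrow> 'v set \<Rightarrow> 'w set
    \<Rightarrow> ('v::ab_group_add \<Rightarrow> 'w::ab_group_add) \<Rightarrow> bool" where
  "lin_on s1 s2 U W f \<longleftrightarrow> (\<forall>x\<in>U. f x \<in> W) \<and> (\<forall>x\<in>U. \<forall>y\<in>U. f (x + y) = f x + f y) \<and>
     (\<forall>c. \<forall>x\<in>U. f (s1 c x) = s2 c (f x))"

text \<open>A functor rho : G \<rightarrow> Vect_C: each object A goes to the complex vector space V A
  (a subspace of the complex vector space ('v, +, s)), each morphism f to the linear map act f.\<close>
definition vect_rep :: "('o,'m) gpd \<Rightarrow> (complex \<Rightarrow> 'v \<Rightarrow> 'v) \<Rightarrow> ('o \<Rightarrow> 'v set) \<Rightarrow> ('m \<Rightarrow> 'v \<Rightarrow> 'v::ab_group_add) \<Rightarrow> bool" where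
  "vect_rep G s V act \<longleftrightarrow> module s \<and>
     (\<forall>A\<in>Obj G. module.subspace s (V A)) \<and>
     (\<forall>A B f. f \<in> Hom G A B \<longrightarrow> lin_on s s (V A) (V B) (act f)) \<and>
     (\<forall>A B C f g. f \<in> Hom G A B \<longrightarrow> g \<in> Hom G B C \<longrightarrow> (\<forall>x\<in>V A. act (cmp G g f) x = act g (act f x))) \<and>
     (\<forall>A\<in>Obj G. \<forall>x\<in>V A. act (idm G A) x = x)"

definition vect_nat_trans :: "('h,'hm) gpd \<Rightarrow> (complex \<Rightarrow> 'v \<Rightarrow> 'v) \<Rightarrow> (complex \<Rightarrow> 'w \<Rightarrow> 'w)
    \<Rightarrow> ('h \<Rightarrow> 'v set) \<Rightarrow> ('hm \<Rightarrow> 'v \<Rightarrow> 'v) \<Rightarrow> ('h \<Rightarrow> 'w set) \<Rightarrow> ('hm \<Rightarrow> 'w \<Rightarrow> 'w)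
    \<Rightarrow> ('h \<Rightarrow> 'v::ab_group_add \<Rightarrow> 'w::ab_group_add) \<Rightarrow> bool" where
  "vect_nat_trans H s1 s2 V1 act1 V2 act2 \<sigma> \<longleftrightarrow>
     (\<forall>X\<in>Obj H. lin_on s1 s2 (V1 X) (V2 X) (\<sigma> X)) \<and>
     (\<forall>X Y h. h \<in> Hom H X Y \<longrightarrow> (\<forall>x\<in>V1 X. \<sigma> Y (act1 h x) = act2 h (\<sigma> X x)))"

definition S_map :: "('o1,'m1) gpd \<Rightarrow> ('h,'hm) gpd \<Rightarrow> ('o2,'m2) gpd
    \<Rightarrow> ('h \<Rightarrow> 'o1) \<Rightarrow> ('hm \<Rightarrow> 'm1) \<Rightarrow> ('h \<Rightarrow> 'o2) \<Rightarrow> ('hm \<Rightarrow> 'm2)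
    \<Rightarrow> (complex \<Rightarrow> 'w \<Rightarrow> 'w) \<Rightarrow> ('h \<Rightarrow> 'v \<Rightarrow> 'w::ab_group_add) \<Rightarrow> 'o1 \<Rightarrow> 'o2 \<Rightarrow> 'h set \<Rightarrow> 'v \<Rightarrow> 'w" where
  "S_map G1 H G2 P1o P1m P2o P2m s2 \<sigma> A B R x =
     s2 (1 / of_nat (card (Aut G2 B)))
       (\<Sum>Y\<in>R. s2 (1 / of_nat (card (Aut (span_fib G1 H G2 P1o P1m P2o P2m A B) Y))) (\<sigma> Y x))"

end

theory Submission
  imports Defs
begin

lemma gpd_obj: "groupoid G \<Longrightarrow> f \<in> Hom G X Y \<Longrightarrow> X \<in> Obj G \<and> Y \<in> Obj G"
  unfolding groupoid_def by (elim conjE) (metis empty_iff)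
lemma gpd_uniq: "groupoid G \<Longrightarrow> f \<in> Hom G X Y \<Longrightarrow> f \<in> Hom G X' Y' \<Longrightarrow> X = X' \<and> Y = Y'"
  unfolding groupoid_def by (elim conjE) (metis empty_iff)
lemma gpd_id: "groupoid G \<Longrightarrow> X \<in> Obj G \<Longrightarrow> idm G X \<in> Hom G X X"
  unfolding groupoid_def by (elim conjE) (metis empty_iff)
lemma gpd_cmp: "groupoid G \<Longrightarrow> f \<in> Hom G X Y \<Longrightarrow> g \<in> Hom G Y Z \<Longrightarrow> cmp G g f \<in> Hom G X Z"
  unfolding groupoid_def by (elim conjE) (metis empty_iff)
lemma gpd_assoc: "groupoid G \<Longrightarrow> f \<in> Hom G X Y \<Longrightarrow> g \<in> Hom G Y Z \<Longrightarrow> h \<in> Hom G Z W \<Longrightarrow>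
   cmp G h (cmp G g f) = cmp G (cmp G h g) f"
  unfolding groupoid_def by (elim conjE) (metis empty_iff)
lemma gpd_idl: "groupoid G \<Longrightarrow> f \<in> Hom G X Y \<Longrightarrow> cmp G (idm G Y) f = f"
  unfolding groupoid_def by (elim conjE) (metis empty_iff)
lemma gpd_idr: "groupoid G \<Longrightarrow> f \<in> Hom G X Y \<Longrightarrow> cmp G f (idm G X) = f"
  unfolding groupoid_def by (elim conjE) (metis empty_iff)
lemma gpd_inv_ex: "groupoid G \<Longrightarrow> f \<in> Hom G X Y \<Longrightarrow> \<exists>g\<in>Hom G Y X. cmp G g f = idm G X \<and> cmp G f g = idm G Y"
  unfolding groupoid_def by (elim conjE) (metis empty_iff)

definition ginv :: "('o,'m) gpd \<Rightarrow> 'm \<Rightarrow> 'm" where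
  "ginv G f = (SOME g. \<exists>X Y. f \<in> Hom G X Y \<and> g \<in> Hom G Y X \<and> cmp G g f = idm G X \<and> cmp G f g = idm G Y)"

lemma ginv:
  assumes G: "groupoid G" and f: "f \<in> Hom G X Y"
  shows "ginv G f \<in> Hom G Y X" "cmp G (ginv G f) f = idm G X" "cmp G f (ginv G f) = idm G Y"
proof -
  obtain g where "g \<in> Hom G Y X" "cmp G g f = idm G X" "cmp G f g = idm G Y"
    using gpd_inv_ex[OF G f] by blast
  with f have ex: "\<exists>g X Y. f \<in> Hom G X Y \<and> g \<in> Hom G Y X \<and> cmp G g f = idm G X \<and> cmp G f g = idm G Y"
    by blast
  from someI_ex[OF ex] obtain X' Y' where h: "f \<in> Hom G X' Y'" "ginv G f \<in> Hom G Y' X'"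
     "cmp G (ginv G f) f = idm G X'" "cmp G f (ginv G f) = idm G Y'"
    unfolding ginv_def by blast
  from gpd_uniq[OF G f h(1)] have "X = X'" "Y = Y'" by auto
  with h show "ginv G f \<in> Hom G Y X" "cmp G (ginv G f) f = idm G X" "cmp G f (ginv G f) = idm G Y"
    by auto
qed

lemma ginv_unique:
  assumes G: "groupoid G" and f: "f \<in> Hom G X Y" and g: "g \<in> Hom G Y X" and e: "cmp G g f = idm G X"
  shows "g = ginv G f"
proof -
  have "g = cmp G g (idm G Y)" using gpd_idr[OF G g] by simp
  also have "\<dots> = cmp G g (cmp G f (ginv G f))" using ginv[OF G f] by simp
  also have "\<dots> = cmp G (cmp G g f) (ginv G f)" using gpd_assoc[OF G ginv(1)[OF G f] f g] .
  also have "\<dots> = ginv G f" using e gpd_idl[OF G ginv(1)[OF G f]] by simp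
  finally show ?thesis .
qed

lemma cancel_l:
  assumes G: "groupoid G" and h: "h \<in> Hom G Y Z" and f: "f \<in> Hom G X Y" and f': "f' \<in> Hom G X Y"
    and e: "cmp G h f = cmp G h f'"
  shows "f = f'"
proof -
  have "f = cmp G (cmp G (ginv G h) h) f" using ginv[OF G h] gpd_idl[OF G f] by simp
  also have "\<dots> = cmp G (ginv G h) (cmp G h f)" using gpd_assoc[OF G f h ginv(1)[OF G h]] by simp
  also have "\<dots> = cmp G (ginv G h) (cmp G h f')" using e by simp
  also have "\<dots> = cmp G (cmp G (ginv G h) h) f'" using gpd_assoc[OF G f' h ginv(1)[OF G h]] by simp
  also have "\<dots> = f'" using ginv[OF G h] gpd_idl[OF G f'] by simp
  finally show ?thesis .
qed

lemma ginv_ginv: "groupoid G \<Longrightarrow> k \<in> Hom G X Y \<Longrightarrow> ginv G (ginv G k) = k"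
  by (metis ginv ginv_unique)

lemma conj_round:
  assumes G: "groupoid G" and k: "k \<in> Hom G Y' Y" and f: "f \<in> Hom G Y' Y'"
  shows "cmp G (ginv G k) (cmp G (cmp G k (cmp G f (ginv G k))) k) = f"
proof -
  let ?k' = "ginv G k"
  have k': "?k' \<in> Hom G Y Y'" using ginv[OF G k] by simp
  have u: "cmp G f ?k' \<in> Hom G Y Y'" using gpd_cmp[OF G k' f] .
  have v: "cmp G k (cmp G f ?k') \<in> Hom G Y Y" using gpd_cmp[OF G u k] .
  have "cmp G ?k' (cmp G (cmp G k (cmp G f ?k')) k) = cmp G (cmp G ?k' (cmp G k (cmp G f ?k'))) k"
    using gpd_assoc[OF G k v k'] .
  also have "cmp G ?k' (cmp G k (cmp G f ?k')) = cmp G (cmp G ?k' k) (cmp G f ?k')"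
    using gpd_assoc[OF G u k k'] .
  also have "\<dots> = cmp G f ?k'" using ginv[OF G k] gpd_idl[OF G u] by simp
  also have "cmp G (cmp G f ?k') k = cmp G f (cmp G ?k' k)" using gpd_assoc[OF G k k' f] by simp
  also have "\<dots> = f" using ginv[OF G k] gpd_idr[OF G f] by simp
  finally show ?thesis .
qed

lemma gfun_obj: "gfunctor G K Fo Fm \<Longrightarrow> A \<in> Obj G \<Longrightarrow> Fo A \<in> Obj K"
  unfolding gfunctor_def by blast
lemma gfun_hom: "gfunctor G K Fo Fm \<Longrightarrow> f \<in> Hom G A B \<Longrightarrow> Fm f \<in> Hom K (Fo A) (Fo B)"
  unfolding gfunctor_def by blast
lemma gfun_cmp: "gfunctor G K Fo Fm \<Longrightarrow> f \<in> Hom G A B \<Longrightarrow> g \<in> Hom G B C \<Longrightarrow> Fm (cmp G g f) = cmp K (Fm g) (Fm f)"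
  unfolding gfunctor_def by blast
lemma gfun_id: "gfunctor G K Fo Fm \<Longrightarrow> A \<in> Obj G \<Longrightarrow> Fm (idm G A) = idm K (Fo A)"
  unfolding gfunctor_def by blast

lemma gfun_inv:
  assumes G: "groupoid G" and K: "groupoid K" and F: "gfunctor G K Fo Fm" and f: "f \<in> Hom G A B"
  shows "Fm (ginv G f) = ginv K (Fm f)"
proof (rule ginv_unique[OF K gfun_hom[OF F f]])
  show "Fm (ginv G f) \<in> Hom K (Fo B) (Fo A)" using gfun_hom[OF F ginv(1)[OF G f]] .
  have "A \<in> Obj G" using gpd_obj[OF G f] by simp
  then show "cmp K (Fm (ginv G f)) (Fm f) = idm K (Fo A)"
    using gfun_cmp[OF F f ginv(1)[OF G f]] ginv(2)[OF G f] gfun_id[OF F] by simp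
qed

lemma ess_finite_hom:
  assumes H: "groupoid H" and ef: "ess_finite H"
  shows "finite (Hom H X Y)"
proof (cases "X \<in> Obj H \<and> Y \<in> Obj H")
  case False
  then have "Hom H X Y = {}" using gpd_obj[OF H, of _ X Y] by auto
  then show ?thesis by simp
next
  case True
  obtain K :: "(nat,nat) gpd" where K: "groupoid K" "finite_gpd K" and eq: "equivalent_gpd H K"
    using ef unfolding ess_finite_def by (elim exE conjE) simp
  obtain Fo Fm Go Gm \<eta> \<epsilon> where
    F: "gfunctor H K Fo Fm" and Gf: "gfunctor K H Go Gm"
    and eta: "nat_trans H H id id (Go \<circ> Fo) (Gm \<circ> Fm) \<eta>"
    using eq unfolding equivalent_gpd_def by (elim exE conjE) simp
  have eY: "\<eta> Y \<in> Hom H Y (Go (Fo Y))" using eta True unfolding nat_trans_def by auto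
  have nat: "\<And>f. f \<in> Hom H X Y \<Longrightarrow> cmp H (Gm (Fm f)) (\<eta> X) = cmp H (\<eta> Y) f"
    using eta unfolding nat_trans_def by auto
  have inj: "inj_on Fm (Hom H X Y)"
  proof (rule inj_onI)
    fix f f' assume f: "f \<in> Hom H X Y" and f': "f' \<in> Hom H X Y" and e: "Fm f = Fm f'"
    have "cmp H (\<eta> Y) f = cmp H (\<eta> Y) f'" using nat[OF f] nat[OF f'] e by simp
    then show "f = f'" using cancel_l[OF H eY f f'] by simp
  qed
  have sub: "Fm ` Hom H X Y \<subseteq> (\<Union>A\<in>Obj K. \<Union>B\<in>Obj K. Hom K A B)"
  proof
    fix m assume "m \<in> Fm ` Hom H X Y"
    then obtain f where "f \<in> Hom H X Y" "m = Fm f" by blast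
    then have "m \<in> Hom K (Fo X) (Fo Y)" using gfun_hom[OF F] by simp
    then show "m \<in> (\<Union>A\<in>Obj K. \<Union>B\<in>Obj K. Hom K A B)" using gfun_obj[OF F] True by blast
  qed
  have "finite (\<Union>A\<in>Obj K. \<Union>B\<in>Obj K. Hom K A B)" using K(2) unfolding finite_gpd_def by simp
  then have "finite (Fm ` Hom H X Y)" using finite_subset[OF sub] by simp
  then show ?thesis using finite_imageD[OF _ inj] by simp
qed

lemma ess_finite_objs:
  assumes H: "groupoid H" and ef: "ess_finite H"
  shows "\<exists>S. finite S \<and> S \<subseteq> Obj H \<and> (\<forall>X\<in>Obj H. \<exists>Z\<in>S. Hom H X Z \<noteq> {})"
proof -
  obtain K :: "(nat,nat) gpd" where K: "groupoid K" "finite_gpd K" and eq: "equivalent_gpd H K"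
    using ef unfolding ess_finite_def by (elim exE conjE) simp
  obtain Fo Fm Go Gm \<eta> \<epsilon> where
    F: "gfunctor H K Fo Fm" and Gf: "gfunctor K H Go Gm"
    and eta: "nat_trans H H id id (Go \<circ> Fo) (Gm \<circ> Fm) \<eta>"
    using eq unfolding equivalent_gpd_def by (elim exE conjE) simp
  show ?thesis
  proof (intro exI conjI ballI)
    show "finite (Go ` Obj K)" using K(2) unfolding finite_gpd_def by simp
    show "Go ` Obj K \<subseteq> Obj H" using gfun_obj[OF Gf] by blast
    fix X assume X: "X \<in> Obj H"
    have "\<eta> X \<in> Hom H X (Go (Fo X))" using eta X unfolding nat_trans_def by auto
    then show "\<exists>Z\<in>Go ` Obj K. Hom H X Z \<noteq> {}" using gfun_obj[OF F X] by blast
  qed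
qed

lemma prod_Obj[simp]: "Obj (prod_gpd G K) = Obj G \<times> Obj K"
  by (simp add: prod_gpd_def)
lemma prod_Hom[simp]: "Hom (prod_gpd G K) (a,a') (c,c') = Hom G a c \<times> Hom K a' c'"
  by (simp add: prod_gpd_def)
lemma prod_cmp[simp]: "cmp (prod_gpd G K) (g,g') (f,f') = (cmp G g f, cmp K g' f')"
  by (simp add: prod_gpd_def)
lemma prod_idm[simp]: "idm (prod_gpd G K) (a,a') = (idm G a, idm K a')"
  by (simp add: prod_gpd_def)

lemma prod_Hom': "f \<in> Hom (prod_gpd G K) X Y \<longleftrightarrow> fst f \<in> Hom G (fst X) (fst Y) \<and> snd f \<in> Hom K (snd X) (snd Y)"
  by (cases X; cases Y; cases f) (simp add: prod_gpd_def)
lemma prod_cmp': "cmp (prod_gpd G K) g f = (cmp G (fst g) (fst f), cmp K (snd g) (snd f))"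
  by (cases f; cases g) (simp add: prod_gpd_def)
lemma prod_idm': "idm (prod_gpd G K) X = (idm G (fst X), idm K (snd X))"
  by (cases X) (simp add: prod_gpd_def)
lemma prod_Obj': "X \<in> Obj (prod_gpd G K) \<longleftrightarrow> fst X \<in> Obj G \<and> snd X \<in> Obj K"
  by (cases X) (simp add: prod_gpd_def)

lemma prod_groupoid:
  assumes G: "groupoid G" and K: "groupoid K"
  shows "groupoid (prod_gpd G K)"
proof -
  let ?P = "prod_gpd G K"
  have c1: "\<forall>A B. Hom ?P A B \<noteq> {} \<longrightarrow> A \<in> Obj ?P \<and> B \<in> Obj ?P"
  proof (intro allI impI)
    fix X Y assume "Hom ?P X Y \<noteq> {}"
    then obtain f where "f \<in> Hom ?P X Y" by blast
    then have "fst f \<in> Hom G (fst X) (fst Y)" "snd f \<in> Hom K (snd X) (snd Y)" by (simp_all add: prod_Hom')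
    then show "X \<in> Obj ?P \<and> Y \<in> Obj ?P" unfolding prod_Obj'
      using gpd_obj[OF G] gpd_obj[OF K] by blast
  qed
  have c2: "\<forall>A B A' B' f. f \<in> Hom ?P A B \<and> f \<in> Hom ?P A' B' \<longrightarrow> A = A' \<and> B = B'"
  proof (intro allI impI)
    fix X Y X' Y' f assume "f \<in> Hom ?P X Y \<and> f \<in> Hom ?P X' Y'"
    then have "fst X = fst X' \<and> fst Y = fst Y'" "snd X = snd X' \<and> snd Y = snd Y'"
      unfolding prod_Hom' using gpd_uniq[OF G] gpd_uniq[OF K] by blast+
    then show "X = X' \<and> Y = Y'" by (simp add: prod_eq_iff)
  qed
  have c3: "\<forall>A\<in>Obj ?P. idm ?P A \<in> Hom ?P A A"
    unfolding prod_Obj' prod_Hom' prod_idm' using gpd_id[OF G] gpd_id[OF K] by simp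
  have c4: "\<forall>A B C f g. f \<in> Hom ?P A B \<longrightarrow> g \<in> Hom ?P B C \<longrightarrow> cmp ?P g f \<in> Hom ?P A C"
    unfolding prod_Hom' prod_cmp' using gpd_cmp[OF G] gpd_cmp[OF K] by fastforce
  have c5: "\<forall>A B C D f g h. f \<in> Hom ?P A B \<longrightarrow> g \<in> Hom ?P B C \<longrightarrow> h \<in> Hom ?P C D \<longrightarrow>
         cmp ?P h (cmp ?P g f) = cmp ?P (cmp ?P h g) f"
  proof (intro allI impI)
    fix X Y Z W f g h assume "f \<in> Hom ?P X Y" "g \<in> Hom ?P Y Z" "h \<in> Hom ?P Z W"
    then show "cmp ?P h (cmp ?P g f) = cmp ?P (cmp ?P h g) f"
      unfolding prod_Hom' prod_cmp' fst_conv snd_conv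
      using gpd_assoc[OF G, of "fst f" "fst X" "fst Y" "fst g" "fst Z" "fst h" "fst W"]
        gpd_assoc[OF K, of "snd f" "snd X" "snd Y" "snd g" "snd Z" "snd h" "snd W"] by simp
  qed
  have c6: "\<forall>A B f. f \<in> Hom ?P A B \<longrightarrow> cmp ?P f (idm ?P A) = f \<and> cmp ?P (idm ?P B) f = f"
  proof (intro allI impI)
    fix X Y f assume "f \<in> Hom ?P X Y"
    then show "cmp ?P f (idm ?P X) = f \<and> cmp ?P (idm ?P Y) f = f"
      unfolding prod_Hom' prod_cmp' prod_idm' fst_conv snd_conv
      using gpd_idl[OF G] gpd_idl[OF K] gpd_idr[OF G] gpd_idr[OF K] by (simp add: prod_eq_iff) blast
  qed
  have c7: "\<forall>A B f. f \<in> Hom ?P A B \<longrightarrow> (\<exists>g\<in>Hom ?P B A. cmp ?P g f = idm ?P A \<and> cmp ?P f g = idm ?P B)"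
  proof (intro allI impI)
    fix X Y f assume "f \<in> Hom ?P X Y"
    then have f1: "fst f \<in> Hom G (fst X) (fst Y)" and f2: "snd f \<in> Hom K (snd X) (snd Y)"
      by (simp_all add: prod_Hom')
    show "\<exists>g\<in>Hom ?P Y X. cmp ?P g f = idm ?P X \<and> cmp ?P f g = idm ?P Y"
      by (rule bexI[of _ "(ginv G (fst f), ginv K (snd f))"])
         (simp_all add: prod_Hom' prod_cmp' prod_idm' ginv[OF G f1] ginv[OF K f2])
  qed
  show ?thesis unfolding groupoid_def using c1 c2 c3 c4 c5 c6 c7 by blast
qed

lemma sym_hom: "groupoid G \<Longrightarrow> Hom G X Y \<noteq> {} \<Longrightarrow> Hom G Y X \<noteq> {}"
proof -
  assume G: "groupoid G" and "Hom G X Y \<noteq> {}"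
  then obtain f where "f \<in> Hom G X Y" by blast
  from ginv(1)[OF G this] show ?thesis by blast
qed
lemma trans_hom: "groupoid G \<Longrightarrow> Hom G X Y \<noteq> {} \<Longrightarrow> Hom G Y Z \<noteq> {} \<Longrightarrow> Hom G X Z \<noteq> {}"
proof -
  assume G: "groupoid G" and "Hom G X Y \<noteq> {}" "Hom G Y Z \<noteq> {}"
  then obtain f g where "f \<in> Hom G X Y" "g \<in> Hom G Y Z" by blast
  from gpd_cmp[OF G this] show ?thesis by blast
qed

lemma reps_uniq:
  assumes G: "groupoid G" and R: "component_reps G R" and Y: "Y \<in> R" "Y' \<in> R" and h: "Hom G Y Y' \<noteq> {}"
  shows "Y = Y'"
proof -
  have YO: "Y \<in> Obj G" using R Y unfolding component_reps_def by blast
  have u: "\<exists>!Z. Z \<in> R \<and> Hom G Y Z \<noteq> {}" using R YO unfolding component_reps_def by blast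
  have "Hom G Y Y \<noteq> {}" using gpd_id[OF G YO] by blast
  then show ?thesis using u Y h by blast
qed

lemma reps_ex: "component_reps G R \<Longrightarrow> X \<in> Obj G \<Longrightarrow> \<exists>Y\<in>R. Hom G X Y \<noteq> {}"
  unfolding component_reps_def by blast

lemma reps_sum_eq:
  assumes G: "groupoid G" and R: "component_reps G R" and R': "component_reps G R'"
    and h: "\<And>Y Y'. Y \<in> Obj G \<Longrightarrow> Y' \<in> Obj G \<Longrightarrow> Hom G Y Y' \<noteq> {} \<Longrightarrow> h Y = h Y'"
  shows "sum h R = sum h R'"
proof -
  define \<phi> where "\<phi> Y = (THE Y'. Y' \<in> R' \<and> Hom G Y Y' \<noteq> {})" for Y
  have RO: "R \<subseteq> Obj G" "R' \<subseteq> Obj G" using R R' unfolding component_reps_def by auto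
  have phi: "\<phi> Y \<in> R' \<and> Hom G Y (\<phi> Y) \<noteq> {}" if "Y \<in> R" for Y
  proof -
    have "Y \<in> Obj G" using RO that by blast
    then have "\<exists>!Y'. Y' \<in> R' \<and> Hom G Y Y' \<noteq> {}" using R' unfolding component_reps_def by blast
    then show ?thesis unfolding \<phi>_def by (rule theI')
  qed
  have bij: "bij_betw \<phi> R R'"
  proof (rule bij_betw_imageI)
    show "inj_on \<phi> R"
    proof (rule inj_onI)
      fix Y1 Y2 assume Y: "Y1 \<in> R" "Y2 \<in> R" "\<phi> Y1 = \<phi> Y2"
      have a: "Hom G Y1 (\<phi> Y1) \<noteq> {}" using phi[OF Y(1)] by blast
      have b: "Hom G Y2 (\<phi> Y1) \<noteq> {}" using phi[OF Y(2)] Y(3) by simp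
      have "Hom G Y2 Y1 \<noteq> {}" using trans_hom[OF G b sym_hom[OF G a]] .
      then show "Y1 = Y2" using reps_uniq[OF G R Y(2) Y(1)] by simp
    qed
    show "\<phi> ` R = R'"
    proof
      show "\<phi> ` R \<subseteq> R'" using phi by blast
      show "R' \<subseteq> \<phi> ` R"
      proof
        fix Y' assume Y': "Y' \<in> R'"
        obtain Y where Y: "Y \<in> R" "Hom G Y' Y \<noteq> {}" using reps_ex[OF R] RO Y' by blast
        have c: "Hom G Y Y' \<noteq> {}" using sym_hom[OF G Y(2)] .
        have d: "Hom G (\<phi> Y) Y \<noteq> {}" using phi[OF Y(1)] sym_hom[OF G] by blast
        have "Hom G (\<phi> Y) Y' \<noteq> {}" using trans_hom[OF G d c] .
        then have "\<phi> Y = Y'" using reps_uniq[OF G R' _ Y'] phi[OF Y(1)] by blast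
        then show "Y' \<in> \<phi> ` R" using Y(1) by blast
      qed
    qed
  qed
  have "sum h R' = sum (\<lambda>Y. h (\<phi> Y)) R" using sum.reindex_bij_betw[OF bij, of h] by simp
  also have "\<dots> = sum h R"
  proof (rule sum.cong)
    fix Y assume Y: "Y \<in> R"
    have "Y \<in> Obj G" "\<phi> Y \<in> Obj G" using phi[OF Y] RO Y by blast+
    then show "h (\<phi> Y) = h Y" using h[of Y "\<phi> Y"] phi[OF Y] by simp
  qed simp
  finally show ?thesis by simp
qed

locale fibsetup =
  fixes E :: "('o,'m) gpd" and Bg :: "('p,'n) gpd" and Po :: "'o \<Rightarrow> 'p" and Pm :: "'m \<Rightarrow> 'n" and b :: 'p
  assumes E: "groupoid E" and Bg: "groupoid Bg" and P: "gfunctor E Bg Po Pm" and b: "b \<in> Obj Bg"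
begin

abbreviation F where "F \<equiv> Fib E Bg Po Pm b"

lemma F_Obj: "X \<in> Obj F \<longleftrightarrow> X \<in> Obj E \<and> Po X = b" by (simp add: Fib_def)
lemma F_Hom: "f \<in> Hom F X Y \<longleftrightarrow> f \<in> Hom E X Y \<and> Po X = b \<and> Po Y = b \<and> Pm f = idm Bg b"
  by (simp add: Fib_def)
lemma F_cmp: "cmp F = cmp E" by (simp add: Fib_def)
lemma F_idm: "idm F = idm E" by (simp add: Fib_def)

lemma idb: "idm Bg b \<in> Hom Bg b b" using gpd_id[OF Bg b] .
lemma idb_idb: "cmp Bg (idm Bg b) (idm Bg b) = idm Bg b" using gpd_idl[OF Bg idb] .
lemma ginv_idb: "ginv Bg (idm Bg b) = idm Bg b" using ginv_unique[OF Bg idb idb idb_idb] by simp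

lemma F_groupoid: "groupoid F"
proof -
  have c1: "\<forall>A B. Hom F A B \<noteq> {} \<longrightarrow> A \<in> Obj F \<and> B \<in> Obj F"
  proof (intro allI impI)
    fix X Y assume "Hom F X Y \<noteq> {}"
    then obtain f where "f \<in> Hom F X Y" by blast
    then have "f \<in> Hom E X Y" "Po X = b" "Po Y = b" by (simp_all add: F_Hom)
    then show "X \<in> Obj F \<and> Y \<in> Obj F" using gpd_obj[OF E] by (simp add: F_Obj)
  qed
  have c2: "\<forall>A B A' B' f. f \<in> Hom F A B \<and> f \<in> Hom F A' B' \<longrightarrow> A = A' \<and> B = B'"
    unfolding F_Hom using gpd_uniq[OF E] by blast
  have c3: "\<forall>A\<in>Obj F. idm F A \<in> Hom F A A"
  proof
    fix X assume "X \<in> Obj F"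
    then have X: "X \<in> Obj E" "Po X = b" by (simp_all add: F_Obj)
    show "idm F X \<in> Hom F X X" unfolding F_idm F_Hom
      using gpd_id[OF E X(1)] gfun_id[OF P X(1)] X(2) by simp
  qed
  have c4: "\<forall>A B C f g. f \<in> Hom F A B \<longrightarrow> g \<in> Hom F B C \<longrightarrow> cmp F g f \<in> Hom F A C"
  proof (intro allI impI)
    fix X Y Z f g assume f: "f \<in> Hom F X Y" and g: "g \<in> Hom F Y Z"
    from f have f1: "f \<in> Hom E X Y" "Po X = b" "Pm f = idm Bg b" by (simp_all add: F_Hom)
    from g have g1: "g \<in> Hom E Y Z" "Po Z = b" "Pm g = idm Bg b" by (simp_all add: F_Hom)
    show "cmp F g f \<in> Hom F X Z" unfolding F_cmp F_Hom
      using gpd_cmp[OF E f1(1) g1(1)] gfun_cmp[OF P f1(1) g1(1)] f1 g1 idb_idb by simp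
  qed
  have c5: "\<forall>A B C D f g h. f \<in> Hom F A B \<longrightarrow> g \<in> Hom F B C \<longrightarrow> h \<in> Hom F C D \<longrightarrow>
         cmp F h (cmp F g f) = cmp F (cmp F h g) f"
    unfolding F_cmp F_Hom using gpd_assoc[OF E] by blast
  have c6: "\<forall>A B f. f \<in> Hom F A B \<longrightarrow> cmp F f (idm F A) = f \<and> cmp F (idm F B) f = f"
    unfolding F_cmp F_Hom F_idm using gpd_idl[OF E] gpd_idr[OF E] by blast
  have c7: "\<forall>A B f. f \<in> Hom F A B \<longrightarrow> (\<exists>g\<in>Hom F B A. cmp F g f = idm F A \<and> cmp F f g = idm F B)"
  proof (intro allI impI)
    fix X Y f assume "f \<in> Hom F X Y"
    then have f: "f \<in> Hom E X Y" "Po X = b" "Po Y = b" "Pm f = idm Bg b" by (simp_all add: F_Hom)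
    have "Pm (ginv E f) = idm Bg b" using gfun_inv[OF E Bg P f(1)] f(4) ginv_idb by simp
    then have "ginv E f \<in> Hom F Y X" unfolding F_Hom using ginv(1)[OF E f(1)] f by simp
    then show "\<exists>g\<in>Hom F Y X. cmp F g f = idm F X \<and> cmp F f g = idm F Y"
      unfolding F_cmp F_idm using ginv[OF E f(1)] by blast
  qed
  show ?thesis unfolding groupoid_def using c1 c2 c3 c4 c5 c6 c7 by blast
qed

lemma conj_card:
  assumes k: "k \<in> Hom E Y' Y" and Y': "Y' \<in> Obj F" and Y: "Y \<in> Obj F"
  shows "card (Aut F Y') = card (Aut F Y)"
proof -
  let ?k' = "ginv E k"
  have k': "?k' \<in> Hom E Y Y'" using ginv[OF E k] by simp
  have PY: "Po Y = b" "Po Y' = b" using Y Y' by (simp_all add: F_Obj)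
  have Pk: "Pm k \<in> Hom Bg b b" using gfun_hom[OF P k] PY by simp
  have Pk': "Pm ?k' = ginv Bg (Pm k)" using gfun_inv[OF E Bg P k] .
  have Pk'h: "Pm ?k' \<in> Hom Bg b b" using Pk' ginv(1)[OF Bg Pk] by simp
  define \<phi> where "\<phi> f = cmp E k (cmp E f ?k')" for f
  define \<psi> where "\<psi> f = cmp E ?k' (cmp E f k)" for f
  have m1: "\<phi> f \<in> Aut F Y" if f: "f \<in> Aut F Y'" for f
  proof -
    have fE: "f \<in> Hom E Y' Y'" and Pf: "Pm f = idm Bg b" using f by (simp_all add: Aut_def F_Hom)
    have u: "cmp E f ?k' \<in> Hom E Y Y'" using gpd_cmp[OF E k' fE] .
    have "Pm (\<phi> f) = cmp Bg (Pm k) (cmp Bg (Pm f) (Pm ?k'))"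
      unfolding \<phi>_def using gfun_cmp[OF P u k] gfun_cmp[OF P k' fE] by simp
    also have "\<dots> = cmp Bg (Pm k) (Pm ?k')" using Pf gpd_idl[OF Bg Pk'h] by simp
    also have "\<dots> = idm Bg b" using Pk' ginv(3)[OF Bg Pk] by simp
    finally show ?thesis using gpd_cmp[OF E u k] PY unfolding \<phi>_def Aut_def F_Hom by simp
  qed
  have m2: "\<psi> f \<in> Aut F Y'" if f: "f \<in> Aut F Y" for f
  proof -
    have fE: "f \<in> Hom E Y Y" and Pf: "Pm f = idm Bg b" using f by (simp_all add: Aut_def F_Hom)
    have u: "cmp E f k \<in> Hom E Y' Y" using gpd_cmp[OF E k fE] .
    have "Pm (\<psi> f) = cmp Bg (Pm ?k') (cmp Bg (Pm f) (Pm k))"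
      unfolding \<psi>_def using gfun_cmp[OF P u k'] gfun_cmp[OF P k fE] by simp
    also have "\<dots> = cmp Bg (Pm ?k') (Pm k)" using Pf gpd_idl[OF Bg Pk] by simp
    also have "\<dots> = idm Bg b" using Pk' ginv(2)[OF Bg Pk] by simp
    finally show ?thesis using gpd_cmp[OF E u k'] PY unfolding \<psi>_def Aut_def F_Hom by simp
  qed
  have r1: "\<psi> (\<phi> f) = f" if f: "f \<in> Aut F Y'" for f
  proof -
    have fE: "f \<in> Hom E Y' Y'" using f by (simp add: Aut_def F_Hom)
    show ?thesis unfolding \<phi>_def \<psi>_def using conj_round[OF E k fE] .
  qed
  have r2: "\<phi> (\<psi> f) = f" if f: "f \<in> Aut F Y" for f
  proof -
    have fE: "f \<in> Hom E Y Y" using f by (simp add: Aut_def F_Hom)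
    show ?thesis unfolding \<phi>_def \<psi>_def using conj_round[OF E k' fE] ginv_ginv[OF E k] by simp
  qed
  have "bij_betw \<phi> (Aut F Y') (Aut F Y)"
    by (rule bij_betw_byWitness[where f'=\<psi>]) (use r1 r2 m1 m2 in blast)+
  then show ?thesis by (rule bij_betw_same_card)
qed

lemma RO: "component_reps F R \<Longrightarrow> Y \<in> R \<Longrightarrow> Y \<in> Obj E \<and> Po Y = b"
  unfolding component_reps_def F_Obj[symmetric] by blast

lemma reps_finite:
  assumes S: "finite S" "\<forall>X\<in>Obj E. \<exists>Z\<in>S. Hom E X Z \<noteq> {}"
    and fin: "\<And>X. finite (Hom Bg b X)"
    and R: "component_reps F R"
  shows "finite R"
proof -
  define ch where "ch Y = (SOME p. fst p \<in> S \<and> snd p \<in> Hom E Y (fst p))" for Y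
  have ch: "fst (ch Y) \<in> S \<and> snd (ch Y) \<in> Hom E Y (fst (ch Y))" if YE: "Y \<in> Obj E" for Y
  proof -
    have "\<exists>Z\<in>S. Hom E Y Z \<noteq> {}" using S(2) YE by (rule bspec)
    then obtain Z where Z: "Z \<in> S" "Hom E Y Z \<noteq> {}" by (rule bexE)
    obtain e where e: "e \<in> Hom E Y Z" using Z(2) by auto
    have "fst (Z,e) \<in> S \<and> snd (Z,e) \<in> Hom E Y (fst (Z,e))" using Z(1) e by simp
    then have "fst (ch Y) \<in> S \<and> snd (ch Y) \<in> Hom E Y (fst (ch Y))"
      unfolding ch_def by (rule someI[where P="\<lambda>p. fst p \<in> S \<and> snd p \<in> Hom E Y (fst p)"])
    then show ?thesis .
  qed
  define \<phi> where "\<phi> Y = (fst (ch Y), Pm (snd (ch Y)))" for Y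
  have img: "\<phi> ` R \<subseteq> Sigma S (\<lambda>Z. Hom Bg b (Po Z))"
  proof
    fix p assume "p \<in> \<phi> ` R"
    then obtain Y where Y: "Y \<in> R" "p = \<phi> Y" by blast
    have YE: "Y \<in> Obj E" "Po Y = b" using RO[OF R Y(1)] by auto
    have "Pm (snd (ch Y)) \<in> Hom Bg (Po Y) (Po (fst (ch Y)))" using gfun_hom[OF P] ch[OF YE(1)] by blast
    then show "p \<in> Sigma S (\<lambda>Z. Hom Bg b (Po Z))" using Y(2) ch[OF YE(1)] YE(2) unfolding \<phi>_def by simp
  qed
  have fin2: "finite (Sigma S (\<lambda>Z. Hom Bg b (Po Z)))" using S(1) fin by (rule finite_SigmaI)
  have inj: "inj_on \<phi> R"
  proof (rule inj_onI)
    fix Y1 Y2 assume Y1: "Y1 \<in> R" and Y2: "Y2 \<in> R" and e: "\<phi> Y1 = \<phi> Y2"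
    have Y1E: "Y1 \<in> Obj E" "Po Y1 = b" using RO[OF R Y1] by auto
    have Y2E: "Y2 \<in> Obj E" "Po Y2 = b" using RO[OF R Y2] by auto
    define Z where "Z = fst (ch Y1)"
    define e1 where "e1 = snd (ch Y1)"
    define e2 where "e2 = snd (ch Y2)"
    have Z2: "fst (ch Y2) = Z" and Pe: "Pm e1 = Pm e2" using e unfolding \<phi>_def Z_def e1_def e2_def by auto
    have e1: "e1 \<in> Hom E Y1 Z" using ch[OF Y1E(1)] unfolding e1_def Z_def by simp
    have e2: "e2 \<in> Hom E Y2 Z" using ch[OF Y2E(1)] Z2 unfolding e2_def by simp
    have k: "cmp E (ginv E e2) e1 \<in> Hom E Y1 Y2" using gpd_cmp[OF E e1 ginv(1)[OF E e2]] .
    have Pe2: "Pm e2 \<in> Hom Bg (Po Y2) (Po Z)" using gfun_hom[OF P e2] .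
    have "Pm (cmp E (ginv E e2) e1) = cmp Bg (ginv Bg (Pm e2)) (Pm e2)"
      using gfun_cmp[OF P e1 ginv(1)[OF E e2]] gfun_inv[OF E Bg P e2] Pe by simp
    also have "\<dots> = idm Bg b" using ginv(2)[OF Bg Pe2] Y2E(2) by simp
    finally have "cmp E (ginv E e2) e1 \<in> Hom F Y1 Y2" unfolding F_Hom using k Y1E Y2E by simp
    then have "Hom F Y1 Y2 \<noteq> {}" by blast
    then show "Y1 = Y2" using reps_uniq[OF F_groupoid R Y1 Y2] by simp
  qed
  have "finite (\<phi> ` R)" using finite_subset[OF img fin2] .
  then show ?thesis using finite_imageD[OF _ inj] by simp
qed

lemma lift_reps:
  assumes fib: "fibration E Bg Po Pm" and a: "a \<in> Hom Bg b b" and R: "component_reps F R"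
  shows "\<exists>L. component_reps F (L ` R) \<and> inj_on L R \<and> (\<forall>Y\<in>R. \<exists>k\<in>Hom E (L Y) Y. Pm k = a)"
proof -
  have lift: "\<exists>p. snd p \<in> Hom E (fst p) X \<and> Pm (snd p) = c \<and> fst p \<in> Obj F"
    if X: "X \<in> Obj F" and c: "c \<in> Hom Bg b b" for X c
  proof -
    from X c have XE: "X \<in> Obj E" and c': "c \<in> Hom Bg b (Po X)" by (auto simp: F_Obj)
    then obtain X' k where k: "k \<in> Hom E X' X" "Pm k = c" using fib unfolding fibration_def by blast
    have "Pm k \<in> Hom Bg (Po X') (Po X)" using gfun_hom[OF P k(1)] .
    then have "Po X' = b" using gpd_uniq[OF Bg _ c] k(2) by blast
    moreover have "X' \<in> Obj E" using gpd_obj[OF E k(1)] by simp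
    ultimately show ?thesis using k by (intro exI[of _ "(X',k)"]) (simp add: F_Obj)
  qed
  define pp where "pp Y = (SOME p. snd p \<in> Hom E (fst p) Y \<and> Pm (snd p) = a \<and> fst p \<in> Obj F)" for Y
  define L where "L Y = fst (pp Y)" for Y
  define kk where "kk Y = snd (pp Y)" for Y
  have LY: "kk Y \<in> Hom E (L Y) Y \<and> Pm (kk Y) = a \<and> L Y \<in> Obj F" if "Y \<in> Obj F" for Y
    using someI_ex[OF lift[OF that a]] unfolding L_def kk_def pp_def by simp
  have RF: "R \<subseteq> Obj F" using R unfolding component_reps_def by blast
  have G: "groupoid F" by (rule F_groupoid)
  have a': "ginv Bg a \<in> Hom Bg b b" using ginv(1)[OF Bg a] .
  have key: "Y1 = Y2" if Y1: "Y1 \<in> R" and Y2: "Y2 \<in> R" and h: "Hom F (L Y1) (L Y2) \<noteq> {}" for Y1 Y2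
  proof -
    obtain q where q: "q \<in> Hom F (L Y1) (L Y2)" using h by blast
    have qE: "q \<in> Hom E (L Y1) (L Y2)" and Pq: "Pm q = idm Bg b" using q by (simp_all add: F_Hom)
    have Y1F: "Y1 \<in> Obj F" and Y2F: "Y2 \<in> Obj F" using RF Y1 Y2 by (auto simp: subset_iff)
    have k1: "kk Y1 \<in> Hom E (L Y1) Y1" "Pm (kk Y1) = a" using LY[OF Y1F] by simp_all
    have k2: "kk Y2 \<in> Hom E (L Y2) Y2" "Pm (kk Y2) = a" using LY[OF Y2F] by simp_all
    have i1: "ginv E (kk Y1) \<in> Hom E Y1 (L Y1)" using ginv(1)[OF E k1(1)] .
    have u: "cmp E q (ginv E (kk Y1)) \<in> Hom E Y1 (L Y2)" using gpd_cmp[OF E i1 qE] .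
    have c: "cmp E (kk Y2) (cmp E q (ginv E (kk Y1))) \<in> Hom E Y1 Y2" using gpd_cmp[OF E u k2(1)] .
    have "Pm (cmp E (kk Y2) (cmp E q (ginv E (kk Y1)))) = cmp Bg a (cmp Bg (idm Bg b) (ginv Bg a))"
      using gfun_cmp[OF P u k2(1)] gfun_cmp[OF P i1 qE] gfun_inv[OF E Bg P k1(1)] k1 k2 Pq by simp
    also have "\<dots> = idm Bg b" using gpd_idl[OF Bg a'] ginv(3)[OF Bg a] by simp
    finally have "cmp E (kk Y2) (cmp E q (ginv E (kk Y1))) \<in> Hom F Y1 Y2"
      unfolding F_Hom using c Y1F Y2F by (simp add: F_Obj)
    then have "Hom F Y1 Y2 \<noteq> {}" by blast
    then show ?thesis using reps_uniq[OF G R Y1 Y2] by simp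
  qed
  have inj: "inj_on L R"
  proof (rule inj_onI)
    fix Y1 Y2 assume Y1: "Y1 \<in> R" and Y2: "Y2 \<in> R" and e: "L Y1 = L Y2"
    have Y1F: "Y1 \<in> Obj F" using RF Y1 by (auto simp: subset_iff)
    have "L Y1 \<in> Obj F" using LY[OF Y1F] by simp
    then have "idm F (L Y1) \<in> Hom F (L Y1) (L Y2)" using gpd_id[OF G] e by simp
    then have "Hom F (L Y1) (L Y2) \<noteq> {}" by blast
    then show "Y1 = Y2" using key[OF Y1 Y2] by simp
  qed
  have reps: "component_reps F (L ` R)"
    unfolding component_reps_def
  proof (intro conjI ballI)
    show "L ` R \<subseteq> Obj F" using LY RF by (auto simp: subset_iff)
    fix X assume X: "X \<in> Obj F"
    obtain p where p: "snd p \<in> Hom E (fst p) X" "Pm (snd p) = ginv Bg a" "fst p \<in> Obj F"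
      using lift[OF X a'] by blast
    obtain Y where Y: "Y \<in> R" "Hom F (fst p) Y \<noteq> {}" using reps_ex[OF R p(3)] by blast
    obtain n where n: "n \<in> Hom F (fst p) Y" using Y(2) by blast
    have nE: "n \<in> Hom E (fst p) Y" and Pn: "Pm n = idm Bg b" using n by (simp_all add: F_Hom)
    have YF: "Y \<in> Obj F" using RF Y(1) by (auto simp: subset_iff)
    have k: "kk Y \<in> Hom E (L Y) Y" "Pm (kk Y) = a" "L Y \<in> Obj F" using LY[OF YF] by simp_all
    have ni: "ginv E n \<in> Hom E Y (fst p)" using ginv(1)[OF E nE] .
    have u: "cmp E (ginv E n) (kk Y) \<in> Hom E (L Y) (fst p)" using gpd_cmp[OF E k(1) ni] .
    have c: "cmp E (snd p) (cmp E (ginv E n) (kk Y)) \<in> Hom E (L Y) X" using gpd_cmp[OF E u p(1)] .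
    have "Pm (cmp E (snd p) (cmp E (ginv E n) (kk Y))) = cmp Bg (ginv Bg a) (cmp Bg (idm Bg b) a)"
      using gfun_cmp[OF P u p(1)] gfun_cmp[OF P k(1) ni] gfun_inv[OF E Bg P nE] Pn ginv_idb k p(2)
      by simp
    also have "\<dots> = idm Bg b" using gpd_idl[OF Bg a] ginv(2)[OF Bg a] by simp
    finally have "cmp E (snd p) (cmp E (ginv E n) (kk Y)) \<in> Hom F (L Y) X"
      unfolding F_Hom using c k(3) X by (simp add: F_Obj)
    then have "Hom F (L Y) X \<noteq> {}" by blast
    then have ex: "Hom F X (L Y) \<noteq> {}" by (rule sym_hom[OF G])
    show "\<exists>!Z. Z \<in> L ` R \<and> Hom F X Z \<noteq> {}"
    proof (rule ex1I[of _ "L Y"])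
      show "L Y \<in> L ` R \<and> Hom F X (L Y) \<noteq> {}" using ex Y(1) by blast
      fix Z assume Z: "Z \<in> L ` R \<and> Hom F X Z \<noteq> {}"
      then obtain Y' where Y': "Y' \<in> R" "Z = L Y'" by blast
      have "Hom F X (L Y') \<noteq> {}" using Z Y'(2) by simp
      then have "Hom F (L Y) (L Y') \<noteq> {}" by (rule trans_hom[OF G sym_hom[OF G ex]])
      then show "Z = L Y" using key[OF Y(1) Y'(1)] Y'(2) by simp
    qed
  qed
  have "\<forall>Y\<in>R. \<exists>k\<in>Hom E (L Y) Y. Pm k = a"
  proof
    fix Y assume "Y \<in> R"
    then have YF: "Y \<in> Obj F" using RF by (auto simp: subset_iff)
    show "\<exists>k\<in>Hom E (L Y) Y. Pm k = a" using LY[OF YF] by blast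
  qed
  then show ?thesis using reps inj by (intro exI[of _ L]) simp
qed

end

lemma lin_on_sum:
  assumes lin: "lin_on s s' U W f" and U0: "0 \<in> U" and Uadd: "\<And>x y. x \<in> U \<Longrightarrow> y \<in> U \<Longrightarrow> x + y \<in> U"
    and v: "\<And>i. i \<in> I \<Longrightarrow> v i \<in> U"
  shows "f (sum v I) = (\<Sum>i\<in>I. f (v i))"
proof -
  have "f (0 + 0) = f 0 + f 0" using lin U0 unfolding lin_on_def by blast
  then have f0: "f 0 = 0" by simp
  show ?thesis
  proof (cases "finite I")
    case False
    then show ?thesis using f0 by simp
  next
    case True
    have "sum v I \<in> U \<and> f (sum v I) = (\<Sum>i\<in>I. f (v i))" using True v
    proof (induction I rule: finite_induct)
      case empty
      then show ?case using U0 f0 by simp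
    next
      case (insert i I)
      have vi: "v i \<in> U" using insert.prems by simp
      have IH: "sum v I \<in> U \<and> f (sum v I) = (\<Sum>i\<in>I. f (v i))" using insert.IH insert.prems by simp
      have "f (v i + sum v I) = f (v i) + f (sum v I)" using lin vi IH unfolding lin_on_def by blast
      then show ?case using insert.hyps IH vi Uadd by simp
    qed
    then show ?thesis by simp
  qed
qed

theorem lemma2p7:
  fixes G1 :: "('o1,'m1) gpd" and G2 :: "('o2,'m2) gpd" and H :: "('h,'hm) gpd"
    and P1o :: "'h \<Rightarrow> 'o1" and P1m :: "'hm \<Rightarrow> 'm1"
    and P2o :: "'h \<Rightarrow> 'o2" and P2m :: "'hm \<Rightarrow> 'm2"
    and s1 :: "complex \<Rightarrow> 'v::ab_group_add \<Rightarrow> 'v" and V1 :: "'o1 \<Rightarrow> 'v set" and act1 :: "'m1 \<Rightarrow> 'v \<Rightarrow> 'v"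
    and s2 :: "complex \<Rightarrow> 'w::ab_group_add \<Rightarrow> 'w" and V2 :: "'o2 \<Rightarrow> 'w set" and act2 :: "'m2 \<Rightarrow> 'w \<Rightarrow> 'w"
    and \<sigma> :: "'h \<Rightarrow> 'v \<Rightarrow> 'w"
    and A :: 'o1 and B :: 'o2
  assumes "groupoid G1" and "groupoid G2" and "groupoid H"
    and "ess_finite G1" and "ess_finite G2" and "ess_finite H"
    and "gfunctor H G1 P1o P1m" and "gfunctor H G2 P2o P2m"
    and "fibrant_span G1 H G2 P1o P1m P2o P2m"
    and "vect_rep G1 s1 V1 act1" and "vect_rep G2 s2 V2 act2"
    and "vect_nat_trans H s1 s2 (V1 \<circ> P1o) (act1 \<circ> P1m) (V2 \<circ> P2o) (act2 \<circ> P2m) \<sigma>"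
    and "A \<in> Obj G1" and "B \<in> Obj G2"
  shows "(\<forall>R. component_reps (span_fib G1 H G2 P1o P1m P2o P2m A B) R \<longrightarrow> finite R) \<and>
         (\<forall>Y\<in>Obj (span_fib G1 H G2 P1o P1m P2o P2m A B).
            finite (Aut (span_fib G1 H G2 P1o P1m P2o P2m A B) Y)) \<and>
         (\<forall>R R'. component_reps (span_fib G1 H G2 P1o P1m P2o P2m A B) R \<longrightarrow>
            component_reps (span_fib G1 H G2 P1o P1m P2o P2m A B) R' \<longrightarrow>
            (\<forall>x\<in>V1 A. S_map G1 H G2 P1o P1m P2o P2m s2 \<sigma> A B R x
                        = S_map G1 H G2 P1o P1m P2o P2m s2 \<sigma> A B R' x)) \<and>
         (\<forall>R. component_reps (span_fib G1 H G2 P1o P1m P2o P2m A B) R \<longrightarrow>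
            (\<forall>x\<in>V1 A. S_map G1 H G2 P1o P1m P2o P2m s2 \<sigma> A B R x \<in> V2 B \<and>
               (\<forall>g\<in>Aut G2 B. act2 g (S_map G1 H G2 P1o P1m P2o P2m s2 \<sigma> A B R x)
                   = S_map G1 H G2 P1o P1m P2o P2m s2 \<sigma> A B R x)))"
proof -
  note G1 = assms(1) and G2 = assms(2) and H = assms(3)
  let ?Po = "\<lambda>X. (P1o X, P2o X)" and ?Pm = "\<lambda>h. (P1m h, P2m h)"
  let ?PG = "prod_gpd G1 G2"
  let ?F = "Fib H ?PG ?Po ?Pm (A, B)"
  have PG: "groupoid ?PG" using prod_groupoid[OF G1 G2] .
  have PF: "gfunctor H ?PG ?Po ?Pm"
    using assms(7,8) unfolding gfunctor_def by simp
  have AB: "(A, B) \<in> Obj ?PG" using assms(13,14) by simp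
  interpret fs: fibsetup H ?PG ?Po ?Pm "(A, B)"
    by (unfold_locales) (rule H, rule PG, rule PF, rule AB)
  have Fe: "span_fib G1 H G2 P1o P1m P2o P2m A B = ?F" by (simp add: span_fib_def)
  have FG: "groupoid ?F" by (rule fs.F_groupoid)
  have FObj: "Y \<in> Obj H \<and> P1o Y = A \<and> P2o Y = B" if "Y \<in> Obj ?F" for Y
    using that fs.F_Obj by simp
  have FHom: "k \<in> Hom H Y Y' \<and> P1m k = idm G1 A \<and> P2m k = idm G2 B" if "k \<in> Hom ?F Y Y'" for k Y Y'
    using that fs.F_Hom by simp
  have VR1: "vect_rep G1 s1 V1 act1" and VR2: "vect_rep G2 s2 V2 act2" using assms(10,11) .
  have mod2: "module s2" using VR2 unfolding vect_rep_def by blast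
  have subB: "module.subspace s2 (V2 B)" using VR2 assms(14) unfolding vect_rep_def by blast
  have sub0: "0 \<in> V2 B" using module.subspace_0[OF mod2 subB] .
  have subadd: "\<And>x y. x \<in> V2 B \<Longrightarrow> y \<in> V2 B \<Longrightarrow> x + y \<in> V2 B"
    using module.subspace_add[OF mod2 subB] by blast
  have subscale: "\<And>c x. x \<in> V2 B \<Longrightarrow> s2 c x \<in> V2 B"
    using module.subspace_scale[OF mod2 subB] by blast
  have act1id: "act1 (idm G1 A) x = x" if "x \<in> V1 A" for x
    using VR1 assms(13) that unfolding vect_rep_def by blast
  have act2id: "act2 (idm G2 B) y = y" if "y \<in> V2 B" for y
    using VR2 assms(14) that unfolding vect_rep_def by blast
  have act2lin: "lin_on s2 s2 (V2 B) (V2 B) (act2 g)" if "g \<in> Hom G2 B B" for g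
    using VR2 that unfolding vect_rep_def by blast
  have NT: "vect_nat_trans H s1 s2 (V1 \<circ> P1o) (act1 \<circ> P1m) (V2 \<circ> P2o) (act2 \<circ> P2m) \<sigma>" using assms(12) .
  have sig_in: "\<sigma> Y x \<in> V2 B" if Y: "Y \<in> Obj ?F" and x: "x \<in> V1 A" for Y x
  proof -
    have "lin_on s1 s2 (V1 (P1o Y)) (V2 (P2o Y)) (\<sigma> Y)" using NT FObj[OF Y] unfolding vect_nat_trans_def by (metis comp_apply)
    then show ?thesis using FObj[OF Y] x unfolding lin_on_def by simp
  qed
  have natl: "\<sigma> Y (act1 (P1m k) x) = act2 (P2m k) (\<sigma> Y' x)"
    if k: "k \<in> Hom H Y' Y" and Y: "Y \<in> Obj ?F" and Y': "Y' \<in> Obj ?F" and x: "x \<in> V1 A" for k Y Y' x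
  proof -
    have "\<forall>x\<in>V1 (P1o Y'). \<sigma> Y (act1 (P1m k) x) = act2 (P2m k) (\<sigma> Y' x)"
      using NT k unfolding vect_nat_trans_def by simp
    then show ?thesis using FObj[OF Y'] x by simp
  qed
  define w where "w Y = 1 / (of_nat (card (Aut ?F Y)) :: complex)" for Y
  define T where "T R x = (\<Sum>Y\<in>R. s2 (w Y) (\<sigma> Y x))" for R x
  have Sm: "S_map G1 H G2 P1o P1m P2o P2m s2 \<sigma> A B R x = s2 (1 / of_nat (card (Aut G2 B))) (T R x)" for R x
    unfolding S_map_def Fe T_def w_def by simp
  have RF: "R \<subseteq> Obj ?F" if "component_reps ?F R" for R
    using that unfolding component_reps_def by blast
  have T_in: "T R x \<in> V2 B" if R: "component_reps ?F R" and x: "x \<in> V1 A" for R x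
    unfolding T_def
    by (rule module.subspace_sum[OF mod2 subB]) (use subscale sig_in RF[OF R] x in blast)
  have p1: "finite R" if R: "component_reps ?F R" for R
  proof -
    obtain S where S: "finite S" "S \<subseteq> Obj H" "\<forall>X\<in>Obj H. \<exists>Z\<in>S. Hom H X Z \<noteq> {}"
      using ess_finite_objs[OF H assms(6)] by blast
    have fin: "finite (Hom ?PG (A, B) X)" for X
    proof -
      obtain x1 x2 where X: "X = (x1, x2)" by (cases X)
      show ?thesis unfolding X prod_Hom
        using ess_finite_hom[OF G1 assms(4)] ess_finite_hom[OF G2 assms(5)] by simp
    qed
    show ?thesis by (rule fs.reps_finite[OF S(1) S(3) fin R])
  qed
  have p2: "finite (Aut ?F Y)" for Y
  proof -
    have "Aut ?F Y \<subseteq> Hom H Y Y" unfolding Aut_def using fs.F_Hom by blast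
    then show ?thesis using finite_subset ess_finite_hom[OF H assms(6)] by blast
  qed
  have p3: "T R x = T R' x" if R: "component_reps ?F R" and R': "component_reps ?F R'" and x: "x \<in> V1 A"
    for R R' x
    unfolding T_def
  proof (rule reps_sum_eq[OF FG R R'])
    fix Y Y' assume Y: "Y \<in> Obj ?F" and Y': "Y' \<in> Obj ?F" and h: "Hom ?F Y Y' \<noteq> {}"
    then obtain k where k: "k \<in> Hom ?F Y Y'" by blast
    have kH: "k \<in> Hom H Y Y'" "P1m k = idm G1 A" "P2m k = idm G2 B" using FHom[OF k] by simp_all
    have "w Y = w Y'" unfolding w_def using fs.conj_card[OF kH(1) Y Y'] by simp
    moreover have "\<sigma> Y' x = \<sigma> Y x"
      using natl[OF kH(1) Y' Y x] kH act1id[OF x] act2id[OF sig_in[OF Y x]] by simp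
    ultimately show "s2 (w Y) (\<sigma> Y x) = s2 (w Y') (\<sigma> Y' x)" by simp
  qed
  have p4: "act2 g (T R x) = T R x"
    if R: "component_reps ?F R" and x: "x \<in> V1 A" and g: "g \<in> Hom G2 B B" for R x g
  proof -
    have a: "(idm G1 A, g) \<in> Hom ?PG (A, B) (A, B)" using gpd_id[OF G1 assms(13)] g by simp
    have fib: "fibration H ?PG ?Po ?Pm" using assms(9) unfolding fibrant_span_def .
    obtain L where L: "component_reps ?F (L ` R)" "inj_on L R"
        "\<forall>Y\<in>R. \<exists>k\<in>Hom H (L Y) Y. ?Pm k = (idm G1 A, g)"
      using fs.lift_reps[OF fib a R] by blast
    have LF: "L Y \<in> Obj ?F" if "Y \<in> R" for Y using RF[OF L(1)] that by blast
    have lin: "lin_on s2 s2 (V2 B) (V2 B) (act2 g)" using act2lin[OF g] .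
    have "T R x = T (L ` R) x" using p3[OF R L(1) x] .
    then have "act2 g (T R x) = act2 g (\<Sum>Y\<in>L ` R. s2 (w Y) (\<sigma> Y x))" unfolding T_def by simp
    also have "\<dots> = (\<Sum>Y\<in>L ` R. act2 g (s2 (w Y) (\<sigma> Y x)))"
    proof (rule lin_on_sum[OF lin sub0 subadd])
      fix Y assume "Y \<in> L ` R"
      then have "Y \<in> Obj ?F" using RF[OF L(1)] by blast
      then show "s2 (w Y) (\<sigma> Y x) \<in> V2 B" using subscale sig_in x by blast
    qed
    also have "\<dots> = (\<Sum>Y\<in>R. act2 g (s2 (w (L Y)) (\<sigma> (L Y) x)))"
      using sum.reindex[OF L(2)] by simp
    also have "\<dots> = (\<Sum>Y\<in>R. s2 (w Y) (\<sigma> Y x))"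
    proof (rule sum.cong)
      fix Y assume Y: "Y \<in> R"
      have YF: "Y \<in> Obj ?F" using RF[OF R] Y by blast
      obtain k where k: "k \<in> Hom H (L Y) Y" "P1m k = idm G1 A" "P2m k = g" using L(3) Y by auto
      have "w (L Y) = w Y" unfolding w_def using fs.conj_card[OF k(1) LF[OF Y] YF] by simp
      moreover have "\<sigma> Y x = act2 g (\<sigma> (L Y) x)"
        using natl[OF k(1) YF LF[OF Y] x] k act1id[OF x] by simp
      moreover have "act2 g (s2 (w Y) (\<sigma> (L Y) x)) = s2 (w Y) (act2 g (\<sigma> (L Y) x))"
        using lin sig_in[OF LF[OF Y] x] unfolding lin_on_def by blast
      ultimately show "act2 g (s2 (w (L Y)) (\<sigma> (L Y) x)) = s2 (w Y) (\<sigma> Y x)" by simp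
    qed simp
    finally show ?thesis unfolding T_def by simp
  qed
  show ?thesis
    unfolding Fe
  proof (intro conjI allI impI ballI)
    fix R assume "component_reps ?F R" then show "finite R" by (rule p1)
  next
    fix Y show "finite (Aut ?F Y)" by (rule p2)
  next
    fix R R' x assume "component_reps ?F R" "component_reps ?F R'" "x \<in> V1 A"
    then show "S_map G1 H G2 P1o P1m P2o P2m s2 \<sigma> A B R x = S_map G1 H G2 P1o P1m P2o P2m s2 \<sigma> A B R' x"
      unfolding Sm using p3[of R R' x] by simp
  next
    fix R x assume R: "component_reps ?F R" and x: "x \<in> V1 A"
    show "S_map G1 H G2 P1o P1m P2o P2m s2 \<sigma> A B R x \<in> V2 B"
      unfolding Sm by (rule subscale[OF T_in[OF R x]])
  next
    fix R x g assume R: "component_reps ?F R" and x: "x \<in> V1 A" and g: "g \<in> Aut G2 B"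
    have gH: "g \<in> Hom G2 B B" using g unfolding Aut_def .
    have "act2 g (s2 (1 / of_nat (card (Aut G2 B))) (T R x)) = s2 (1 / of_nat (card (Aut G2 B))) (act2 g (T R x))"
      using act2lin[OF gH] T_in[OF R x] unfolding lin_on_def by simp
    then show "act2 g (S_map G1 H G2 P1o P1m P2o P2m s2 \<sigma> A B R x) = S_map G1 H G2 P1o P1m P2o P2m s2 \<sigma> A B R x"
      unfolding Sm using p4[OF R x gH] by simp
  qed
qed

end
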